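(* Let $d\ge2$, $A\in\mathcal C^{d-1}$ and $\tau\in(0,1]$. Then for every $C\in\mathcal C^d_A$, $$\tfrac{\tau}{2}\le\int_{\mathbb I^{d-1}}Q^\tau_C(\mathbf x)\,\mathrm d\mu_A(\mathbf x)\le\tfrac{\tau+1}{2},$$ and both bounds are best possible, i.e. $\inf_{C\in\mathcal C^d_A}\int Q^\tau_C\,\mathrm d\mu_A=\frac\tau2$ and $\sup_{C\in\mathcal C^d_A}\int Q^\tau_C\,\mathrm d\mu_A=\frac{\tau+1}2$.
   Context: $\mathbb I=[0,1]$, $\lambda$ Lebesgue measure. A $d$-copula $C\in\mathcal C^d$ is the distribution function on $\mathbb I^d$ of a probability measure $\mu_C$ with uniform univariate marginals; points are $(\mathbf x,y)$, $\mathbf x\in\mathbb I^{d-1}$. $C_{1:(d-1)}$ is the marginal copula of the first $d-1$ coordinates; $\mathcal C^d_A=\{C\in\mathcal C^d:C_{1:(d-1)}=A\}$ (for $d=2$, $\mu_A=\lambda$, $\mathcal C^2_A=\mathcal C^2$). $K_C$ is the Markov kernel of $C$ w.r.t. the first $d-1$ coordinates: $\mu_C(B\times F)=\int_B K_C(\mathbf x,F)\,\mathrm d\mu_{A}(\mathbf x)$ for $C\in\mathcal C^d_A$. The $\tau$-quantile regression function is $Q^\tau_C(\mathbf x)=\inf\{y\in\mathbb I: K_C(\mathbf x,[0,y])\ge\tau\}$. *)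

theory Defs
  imports "HOL-Probability.Probability"
begin

text \<open>Points of the unit cube of dimension d are functions nat => real, coordinates 0..d-1
  (extensional outside {..<d}), as in the product measure PiM.\<close>

definition cube_space :: "nat \<Rightarrow> (nat \<Rightarrow> real) measure" where
  "cube_space d = PiM {..<d} (\<lambda>_. borel)"

text \<open>A d-copula, identified with its probability measure mu_C: a probability measure on
  R^d with uniform univariate marginals on [0,1].\<close>
definition is_copula :: "nat \<Rightarrow> (nat \<Rightarrow> real) measure \<Rightarrow> bool" where
  "is_copula d M \<longleftrightarrow> prob_space M \<and> sets M = sets (cube_space d) \<and>
     (\<forall>i<d. distr M borel (\<lambda>z. z i) = uniform_measure lborel {0..1})"

definition marg_first :: "nat \<Rightarrow> (nat \<Rightarrow> real) measure \<Rightarrow> (nat \<Rightarrow> real) measure" where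
  "marg_first d C = distr C (cube_space (d - 1)) (\<lambda>z. restrict z {..<d - 1})"

definition copulas_with_marginal :: "nat \<Rightarrow> (nat \<Rightarrow> real) measure \<Rightarrow> (nat \<Rightarrow> real) measure set" where
  "copulas_with_marginal d A = {C. is_copula d C \<and> marg_first d C = A}"

definition is_markov_kernel_of ::
  "nat \<Rightarrow> (nat \<Rightarrow> real) measure \<Rightarrow> (nat \<Rightarrow> real) measure \<Rightarrow> ((nat \<Rightarrow> real) \<Rightarrow> real measure) \<Rightarrow> bool" where
  "is_markov_kernel_of d A C K \<longleftrightarrow>
     (\<forall>x\<in>space A. prob_space (K x) \<and> sets (K x) = sets borel) \<and>
     (\<forall>F\<in>sets borel. (\<lambda>x. measure (K x) F) \<in> borel_measurable A) \<and>
     (\<forall>B\<in>sets A. \<forall>F\<in>sets borel.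
        measure C {z \<in> space C. restrict z {..<d - 1} \<in> B \<and> z (d - 1) \<in> F}
          = set_lebesgue_integral A B (\<lambda>x. measure (K x) F))"

definition quantile_reg :: "((nat \<Rightarrow> real) \<Rightarrow> real measure) \<Rightarrow> real \<Rightarrow> (nat \<Rightarrow> real) \<Rightarrow> real" where
  "quantile_reg K \<tau> x = Inf {y \<in> {0..1}. measure (K x) {0..y} \<ge> \<tau>}"

end

theory Submission
  imports Defs
begin


abbreviation U01 :: "real measure" where "U01 \<equiv> uniform_measure lborel {0..1}"

lemma U01_density: "U01 = density lborel (\<lambda>x. ennreal (indicator {0..1} x))"
  unfolding uniform_measure_def by (rule arg_cong[where f="density lborel"]) (auto simp: fun_eq_iff split: split_indicator)

lemma prob_U01: "prob_space U01"
  by (rule prob_space_uniform_measure) auto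

lemma integral_U01:
  fixes f :: "real \<Rightarrow> real"
  assumes "continuous_on UNIV f"
  shows "(\<integral>x. f x \<partial>U01) = integral {0..1} f"
proof -
  have c: "continuous_on {0..1} f" using assms continuous_on_subset by blast
  have si: "set_integrable lborel {0..1} f"
    unfolding set_integrable_def using borel_integrable_compact[OF _ c] by simp
  have m: "f \<in> borel_measurable borel" using assms by (simp add: borel_measurable_continuous_onI) 
  have "(\<integral>x. f x \<partial>U01) = (\<integral>x. indicator {0..1} x * f x \<partial>lborel)"
    unfolding U01_density
    by (subst integral_density) (auto simp: m)
  also have "\<dots> = (LINT x:{0..1}|lborel. f x)" by (simp add: set_lebesgue_integral_def)
  also have "\<dots> = integral {0..1} f" using set_borel_integral_eq_integral(2)[OF si] .
  finally show ?thesis .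
qed

lemma ftc_lin:
  fixes a b \<alpha> \<beta> :: real
  assumes "a \<le> b" "v = (\<alpha> * b + \<beta> * b\<^sup>2 / 2) - (\<alpha> * a + \<beta> * a\<^sup>2 / 2)"
  shows "((\<lambda>y. \<alpha> + \<beta> * y) has_integral v) {a..b}"
proof -
  have "((\<lambda>y. \<alpha> * y + \<beta> * y\<^sup>2 / 2) has_vector_derivative (\<alpha> + \<beta> * x)) (at x within {a..b})" for x
    unfolding has_real_derivative_iff_has_vector_derivative[symmetric]
    by (auto intro!: derivative_eq_intros simp: algebra_simps)
  from fundamental_theorem_of_calculus[OF assms(1) this] assms(2) show ?thesis by simp
qed

lemma int_f1:
  fixes t :: real assumes "0 \<le> t" "t \<le> 1"
  shows "integral {0..1} (\<lambda>y. max 0 (t - max y 0)) = t\<^sup>2 / 2"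
proof -
  have "((\<lambda>y. t + (-1) * y) has_integral t\<^sup>2/2) {0..t}"
    by (rule ftc_lin) (use assms in \<open>auto simp: power2_eq_square\<close>)
  then have 1: "((\<lambda>y. max 0 (t - max y 0)) has_integral t\<^sup>2/2) {0..t}"
    by (rule has_integral_eq[rotated]) (auto simp: power2_eq_square)
  have 2: "((\<lambda>y. max 0 (t - max y 0)) has_integral 0) {t..1}"
    by (rule has_integral_eq[rotated, OF has_integral_0]) (use assms in auto)
  from has_integral_combine[OF assms(1,2) 1 2] show ?thesis by (simp add: integral_unique)
qed

lemma int_f2:
  fixes t :: real assumes "0 \<le> t" "t \<le> 1"
  shows "integral {0..1} (\<lambda>y. max 0 (min y 1 - t)) = (1 - t)\<^sup>2 / 2"
proof -
  have "((\<lambda>y. (-t) + 1 * y) has_integral (1-t)\<^sup>2/2) {t..1}"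
    by (rule ftc_lin) (use assms in \<open>auto simp: power2_eq_square field_simps\<close>)
  then have 2: "((\<lambda>y. max 0 (min y 1 - t)) has_integral (1-t)\<^sup>2/2) {t..1}"
    by (rule has_integral_eq[rotated]) (auto simp: power2_eq_square algebra_simps)
  have 1: "((\<lambda>y. max 0 (min y 1 - t)) has_integral 0) {0..t}"
    by (rule has_integral_eq[rotated, OF has_integral_0]) (use assms in auto)
  from has_integral_combine[OF assms(1,2) 1 2] show ?thesis by (simp add: integral_unique)
qed

lemma int_id: "integral {0..1} (\<lambda>y::real. y) = 1/2"
proof -
  have "((\<lambda>y. 0 + 1 * y) has_integral 1/2) {0..1::real}"
    by (rule ftc_lin) auto
  then show ?thesis by (simp add: integral_unique)
qed

lemma U01_f1: "0 \<le> t \<Longrightarrow> t \<le> 1 \<Longrightarrow> (\<integral>y. max 0 (t - max y 0) \<partial>U01) = t\<^sup>2 / 2"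
  by (subst integral_U01) (auto intro!: continuous_intros simp: int_f1)
lemma U01_f2: "0 \<le> t \<Longrightarrow> t \<le> 1 \<Longrightarrow> (\<integral>y. max 0 (min y 1 - t) \<partial>U01) = (1 - t)\<^sup>2 / 2"
  by (subst integral_U01) (auto intro!: continuous_intros simp: int_f2)
lemma U01_id: "(\<integral>y. y \<partial>U01) = 1/2"
  by (subst integral_U01) (auto intro!: continuous_intros simp: int_id)



definition qset :: "real measure \<Rightarrow> real \<Rightarrow> real set" where
  "qset \<nu> \<tau> = {y \<in> {0..1}. measure \<nu> {0..y} \<ge> \<tau>}"

lemma quantile_reg_qset: "quantile_reg K \<tau> x = Inf (qset (K x) \<tau>)"
  unfolding quantile_reg_def qset_def ..

lemma measure_0y_mono:
  fixes \<nu> :: "real measure"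
  assumes "prob_space \<nu>" "sets \<nu> = sets borel" "y \<le> y'"
  shows "measure \<nu> {0..y} \<le> measure \<nu> {0..y'}"
proof -
  interpret prob_space \<nu> by fact
  have "{0..y} \<subseteq> {0..y'}" using assms(3) by auto
  moreover have "{0..y'} \<in> sets \<nu>" using assms(2) by simp
  ultimately show ?thesis by (rule finite_measure_mono)
qed

lemma qset_props:
  assumes P: "prob_space \<nu>" and S: "sets \<nu> = sets borel" and t: "\<tau> \<le> measure \<nu> {0..1}"
  shows "Inf (qset \<nu> \<tau>) \<in> qset \<nu> \<tau>"
    and "\<And>c. Inf (qset \<nu> \<tau>) \<le> c \<longleftrightarrow> (1 \<le> c \<or> (0 \<le> c \<and> \<tau> \<le> measure \<nu> {0..c}))"
proof -
  interpret real_distribution \<nu> using P S by (simp add: real_distribution_def real_distribution_axioms_def)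
  let ?S = "qset \<nu> \<tau>" let ?q = "Inf ?S"
  have mono: "\<And>y y'. y \<le> y' \<Longrightarrow> measure \<nu> {0..y} \<le> measure \<nu> {0..y'}"
    using measure_0y_mono[OF P S] .
  have one: "1 \<in> ?S" using t by (simp add: qset_def)
  have bdd: "bdd_below ?S" by (rule bdd_belowI[of _ 0]) (auto simp: qset_def)
  have q0: "0 \<le> ?q" using one by (intro cInf_greatest) (auto simp: qset_def)
  have q1: "?q \<le> 1" using one bdd by (rule cInf_lower)
  have up: "y \<in> ?S" if "?q < y" "y \<le> 1" for y
  proof -
    have "\<exists>s\<in>?S. s < y" using cInf_less_iff[of ?S y] one bdd that(1) by blast
    then obtain s where s: "s \<in> ?S" "s < y" by blast
    then show ?thesis using mono[of s y] that q0 unfolding qset_def by auto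
  qed
  have qin: "?q \<in> ?S"
  proof (cases "?q = 1")
    case True then show ?thesis using one by simp
  next
    case False
    then have ql: "?q < 1" using q1 by simp
    define c0 where "c0 = measure \<nu> {..<0}"
    have split: "measure \<nu> {0..y} = cdf \<nu> y - c0" if "0 \<le> y" for y
    proof -
      have e: "{..y} = {..<0} \<union> {0..y}" using that by auto
      have "measure \<nu> ({..<0} \<union> {0..y}) = c0 + measure \<nu> {0..y}"
        unfolding c0_def by (rule finite_measure_Union) auto
      then have "measure \<nu> {..y} = c0 + measure \<nu> {0..y}" by (simp only: e)
      then show ?thesis by (simp add: cdf_def)
    qed
    have lim: "((\<lambda>y. cdf \<nu> y - c0) \<longlongrightarrow> cdf \<nu> ?q - c0) (at_right ?q)"
      using cdf_is_right_cont[of ?q] unfolding continuous_within by (intro tendsto_intros)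
    have ev: "eventually (\<lambda>y. \<tau> \<le> cdf \<nu> y - c0) (at_right ?q)"
      using eventually_at_right_real[OF ql]
    proof (rule eventually_mono)
      fix y assume "y \<in> {?q<..<1}"
      then have "y \<in> ?S" by (intro up) auto
      then show "\<tau> \<le> cdf \<nu> y - c0" using split[of y] q0 \<open>y \<in> {?q<..<1}\<close> by (auto simp: qset_def)
    qed
    have "\<tau> \<le> cdf \<nu> ?q - c0"
      by (rule tendsto_lowerbound[OF lim ev]) simp
    then show ?thesis using split[OF q0] q0 q1 by (simp add: qset_def)
  qed
  show "?q \<in> ?S" by (rule qin)
  fix c
  show "?q \<le> c \<longleftrightarrow> (1 \<le> c \<or> (0 \<le> c \<and> \<tau> \<le> measure \<nu> {0..c}))"
  proof
    assume qc: "?q \<le> c"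
    show "1 \<le> c \<or> (0 \<le> c \<and> \<tau> \<le> measure \<nu> {0..c})"
      using qin mono[OF qc] q0 qc by (auto simp: qset_def)
  next
    assume "1 \<le> c \<or> (0 \<le> c \<and> \<tau> \<le> measure \<nu> {0..c})"
    then show "?q \<le> c"
    proof
      assume "1 \<le> c" then show ?thesis using q1 by simp
    next
      assume h: "0 \<le> c \<and> \<tau> \<le> measure \<nu> {0..c}"
      show ?thesis
      proof (cases "c \<le> 1")
        case True
        then have "c \<in> ?S" using h by (simp add: qset_def)
        then show ?thesis using bdd by (rule cInf_lower)
      next
        case False then show ?thesis using q1 by simp
      qed
    qed
  qed
qed

lemma q_lower:
  assumes P: "prob_space \<nu>" and S: "sets \<nu> = sets borel" and tp: "0 < \<tau>"
    and t: "\<tau> \<le> measure \<nu> {0..1}"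
  shows "\<tau> - (\<integral>y. max 0 (\<tau> - max y 0) \<partial>\<nu>) / \<tau> \<le> Inf (qset \<nu> \<tau>)"
proof -
  interpret prob_space \<nu> by fact
  let ?q = "Inf (qset \<nu> \<tau>)"
  let ?f = "\<lambda>y::real. max 0 (\<tau> - max y 0)"
  define I where "I = (\<integral>y. ?f y \<partial>\<nu>)"
  have qin: "?q \<in> qset \<nu> \<tau>" by (rule qset_props(1)[OF P S t])
  then have q0: "0 \<le> ?q" and mq: "\<tau> \<le> measure \<nu> {0..?q}" by (auto simp: qset_def)
  have meas: "?f \<in> borel_measurable \<nu>" by (simp add: measurable_cong_sets[OF S refl])
  have int: "integrable \<nu> ?f"
    by (rule integrable_const_bound[where B=\<tau>]) (use tp meas in auto)
  have I0: "0 \<le> I" unfolding I_def by (rule Bochner_Integration.integral_nonneg) auto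
  show ?thesis
  proof (cases "\<tau> \<le> ?q")
    case True
    have "0 \<le> I / \<tau>" using I0 tp by simp
    then show ?thesis using True unfolding I_def by linarith
  next
    case False
    have int2: "integrable \<nu> (\<lambda>y. (\<tau> - ?q) * indicator {..?q} y)"
      using S by (intro integrable_mult_right integrable_real_indicator) (auto simp: emeasure_eq_measure)
    have "(\<integral>y. (\<tau> - ?q) * indicator {..?q} y \<partial>\<nu>) \<le> I"
      unfolding I_def
      by (rule integral_mono[OF int2 int]) (use q0 in \<open>auto split: split_indicator\<close>)
    moreover have "(\<integral>y. (\<tau> - ?q) * indicator {..?q} y \<partial>\<nu>) = (\<tau> - ?q) * measure \<nu> {..?q}"
      using S by simp
    moreover have "measure \<nu> {0..?q} \<le> measure \<nu> {..?q}"
      using S by (intro finite_measure_mono) auto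
    ultimately have "(\<tau> - ?q) * \<tau> \<le> I"
      using mq False by (smt (verit, best) mult_left_mono)
    then have "\<tau> - ?q \<le> I / \<tau>" using tp by (simp add: le_divide_eq)
    then show ?thesis unfolding I_def by linarith
  qed
qed

lemma q_upper:
  assumes P: "prob_space \<nu>" and S: "sets \<nu> = sets borel" and tp: "0 < \<tau>" and t1: "\<tau> < 1"
    and t: "measure \<nu> {0..1} = 1"
  shows "Inf (qset \<nu> \<tau>) \<le> \<tau> + (\<integral>y. max 0 (min y 1 - \<tau>) \<partial>\<nu>) / (1 - \<tau>)"
proof -
  interpret prob_space \<nu> by fact
  let ?q = "Inf (qset \<nu> \<tau>)"
  let ?f = "\<lambda>y::real. max 0 (min y 1 - \<tau>)"
  define J where "J = (\<integral>y. ?f y \<partial>\<nu>)"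
  have tt: "\<tau> \<le> measure \<nu> {0..1}" using t t1 by simp
  have qin: "?q \<in> qset \<nu> \<tau>" by (rule qset_props(1)[OF P S tt])
  then have q0: "0 \<le> ?q" and q1: "?q \<le> 1" by (auto simp: qset_def)
  have meas: "?f \<in> borel_measurable \<nu>" by (simp add: measurable_cong_sets[OF S refl])
  have int: "integrable \<nu> ?f"
    by (rule integrable_const_bound[where B=1]) (use tp meas in auto)
  have J0: "0 \<le> J" unfolding J_def by (rule Bochner_Integration.integral_nonneg) auto
  have sp: "space \<nu> = UNIV" using sets_eq_imp_space_eq[OF S] by simp
  have c0: "measure \<nu> (UNIV - {0..1}) = 0"
    using prob_compl[of "{0..1}"] S t sp by simp
  show ?thesis
  proof (cases "?q \<le> \<tau>")
    case True
    have "0 \<le> J / (1 - \<tau>)" using J0 t1 by simp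
    then show ?thesis using True unfolding J_def by linarith
  next
    case False
    show ?thesis unfolding J_def[symmetric]
    proof (rule dense_le_bounded[of \<tau> ?q])
      show "\<tau> < ?q" using False by simp
      fix w assume w: "\<tau> < w" "w < ?q"
      have "\<not> ?q \<le> w" using w by simp
      then have mw: "measure \<nu> {0..w} < \<tau>" and w1: "w < 1"
        using qset_props(2)[OF P S tt, of w] w tp by auto
      have "measure \<nu> {..w} \<le> measure \<nu> ((UNIV - {0..1}) \<union> {0..w})"
        using S by (intro finite_measure_mono) auto
      also have "\<dots> \<le> measure \<nu> (UNIV - {0..1}) + measure \<nu> {0..w}"
        using S by (intro measure_subadditive) (auto simp: emeasure_eq_measure)
      finally have mle: "measure \<nu> {..w} < \<tau>" using c0 mw by simp
      have "measure \<nu> {w<..} = 1 - measure \<nu> {..w}"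
        using prob_compl[of "{..w}"] S sp by (simp add: Compl_eq_Diff_UNIV[symmetric] Compl_atMost)
      then have mg: "1 - \<tau> \<le> measure \<nu> {w<..}" using mle by simp
      have int2: "integrable \<nu> (\<lambda>y. (w - \<tau>) * indicator {w<..} y)"
        using S by (intro integrable_mult_right integrable_real_indicator) (auto simp: emeasure_eq_measure)
      have "(\<integral>y. (w - \<tau>) * indicator {w<..} y \<partial>\<nu>) \<le> J"
        unfolding J_def
        by (rule integral_mono[OF int2 int]) (use w1 in \<open>auto split: split_indicator\<close>)
      moreover have "(\<integral>y. (w - \<tau>) * indicator {w<..} y \<partial>\<nu>) = (w - \<tau>) * measure \<nu> {w<..}"
        using S by simp
      ultimately have "(w - \<tau>) * (1 - \<tau>) \<le> J"
        using mg w by (smt (verit, best) mult_left_mono)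
      then have "w - \<tau> \<le> J / (1 - \<tau>)" using t1 by (simp add: le_divide_eq)
      then show "w \<le> \<tau> + J / (1 - \<tau>)" by linarith
    qed
  qed
qed



lemma pe: "prob_space M \<Longrightarrow> emeasure M F = ennreal (measure M F)"
  by (simp add: finite_measure.emeasure_eq_measure prob_space_def)

lemma abs_int_bound:
  fixes f :: "'a \<Rightarrow> real"
  assumes "prob_space M" "f \<in> borel_measurable M" "\<And>y. \<bar>f y\<bar> \<le> B"
  shows "\<bar>\<integral>y. f y \<partial>M\<bar> \<le> B"
proof -
  interpret prob_space M by fact
  have i: "integrable M f" by (rule integrable_const_bound[where B=B]) (use assms in auto)
  have lb: "\<And>y. -B \<le> f y" using assms(3) by (metis abs_le_D2 minus_le_iff)
  have "(\<integral>y. f y \<partial>M) \<le> (\<integral>y. B \<partial>M)"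
    by (rule integral_mono[OF i]) (use assms in \<open>auto simp: abs_le_iff\<close>)
  moreover have "(\<integral>y. -B \<partial>M) \<le> (\<integral>y. f y \<partial>M)"
    by (rule integral_mono[OF _ i]) (use lb in auto)
  ultimately show ?thesis by (simp add: prob_space)
qed

lemma bounds:
  fixes d :: nat and A C :: "(nat \<Rightarrow> real) measure" and K and \<tau> :: real
  assumes d2: "d \<ge> 2" and Acop: "is_copula (d - 1) A" and tp: "0 < \<tau>" and t1: "\<tau> \<le> 1"
    and Cin: "C \<in> copulas_with_marginal d A" and Kk: "is_markov_kernel_of d A C K"
  shows "\<tau> / 2 \<le> (\<integral>x. quantile_reg K \<tau> x \<partial>A) \<and> (\<integral>x. quantile_reg K \<tau> x \<partial>A) \<le> (\<tau> + 1) / 2"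
proof -
  define n where "n = d - 1"
  have nd: "n < d" using d2 by (simp add: n_def)
  have PA: "prob_space A" and SA: "sets A = sets (cube_space n)" using Acop by (auto simp: is_copula_def n_def)
  have PC: "prob_space C" and SC: "sets C = sets (cube_space d)" and UC: "distr C borel (\<lambda>z. z n) = U01"
    using Cin nd by (auto simp: copulas_with_marginal_def is_copula_def n_def)
  interpret A: prob_space A by (rule PA)
  interpret C: prob_space C by (rule PC)
  have Kp: "\<And>x. x \<in> space A \<Longrightarrow> prob_space (K x)" and Ks: "\<And>x. x \<in> space A \<Longrightarrow> sets (K x) = sets borel"
    and Km: "\<And>F. F \<in> sets borel \<Longrightarrow> (\<lambda>x. measure (K x) F) \<in> borel_measurable A"
    and Kid: "\<And>B F. B \<in> sets A \<Longrightarrow> F \<in> sets borel \<Longrightarrow>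
       measure C {z \<in> space C. restrict z {..<n} \<in> B \<and> z n \<in> F} = set_lebesgue_integral A B (\<lambda>x. measure (K x) F)"
    using Kk by (auto simp: is_markov_kernel_of_def n_def)
  have spA: "space A = PiE {..<n} (\<lambda>_. UNIV)"
    using sets_eq_imp_space_eq[OF SA] by (simp add: cube_space_def space_PiM)
  have neA: "space A \<noteq> {}" by (rule A.not_empty)
  have Kmeas: "K \<in> measurable A (subprob_algebra borel)"
  proof (rule measurable_subprob_algebra)
    fix a assume "a \<in> space A"
    then show "subprob_space (K a)" "sets (K a) = sets borel"
      using Kp Ks prob_space_imp_subprob_space by auto
  next
    fix F :: "real set" assume F: "F \<in> sets borel"
    have "(\<lambda>x. ennreal (measure (K x) F)) \<in> borel_measurable A" using Km[OF F] by measurable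
    moreover have "\<And>x. x \<in> space A \<Longrightarrow> emeasure (K x) F = ennreal (measure (K x) F)"
      using Kp pe by blast
    ultimately show "(\<lambda>a. emeasure (K a) F) \<in> borel_measurable A"
      using measurable_cong[of A "\<lambda>a. emeasure (K a) F" "\<lambda>x. ennreal (measure (K x) F)" borel] by simp
  qed
  have ml1: "measure (K x) F \<le> 1" if "x \<in> space A" for x F
    using prob_space.prob_le_1[OF Kp[OF that]] .
  have zn: "(\<lambda>z. z n) \<in> measurable C borel"
    unfolding measurable_cong_sets[OF SC refl] cube_space_def using nd
    by (intro measurable_component_singleton) auto
  have mK1: "integrable A (\<lambda>x. measure (K x) F)" if F: "F \<in> sets borel" for F
    by (rule A.integrable_const_bound[where B=1]) (use Km[OF F] ml1 in \<open>auto intro!: AE_I2\<close>)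
  have kint: "(\<integral>x. measure (K x) F \<partial>A) = measure U01 F" if F: "F \<in> sets borel" for F
  proof -
    have "{z \<in> space C. restrict z {..<n} \<in> space A \<and> z n \<in> F} = (\<lambda>z. z n) -` F \<inter> space C"
      using spA by auto
    moreover have "measure C ((\<lambda>z. z n) -` F \<inter> space C) = measure U01 F"
      using UC measure_distr[OF zn, of F] F by simp
    moreover have "set_lebesgue_integral A (space A) (\<lambda>x. measure (K x) F) = (\<integral>x. measure (K x) F \<partial>A)"
      unfolding set_lebesgue_integral_def by (rule Bochner_Integration.integral_cong) auto
    ultimately show ?thesis using Kid[OF _ F, of "space A"] by simp
  qed
  have bindU: "bind A K = U01"
  proof (rule measure_eqI)
    show "sets (bind A K) = sets U01" using sets_bind[OF Ks neA] by simp
  next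
    fix F assume "F \<in> sets (bind A K)"
    then have F: "F \<in> sets borel" using sets_bind[OF Ks neA] by simp
    have "emeasure (bind A K) F = (\<integral>\<^sup>+x. emeasure (K x) F \<partial>A)" by (rule emeasure_bind[OF neA Kmeas F])
    also have "\<dots> = (\<integral>\<^sup>+x. ennreal (measure (K x) F) \<partial>A)" by (rule nn_integral_cong) (simp add: pe[OF Kp])
    also have "\<dots> = ennreal (\<integral>x. measure (K x) F \<partial>A)" by (rule nn_integral_eq_integral[OF mK1[OF F]]) simp
    also have "\<dots> = emeasure U01 F" using kint[OF F] prob_U01 by (simp add: pe)
    finally show "emeasure (bind A K) F = emeasure U01 F" .
  qed
  have intK: "(\<integral>y. f y \<partial>U01) = (\<integral>x. (\<integral>y. f y \<partial>K x) \<partial>A)"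
    and intKi: "integrable A (\<lambda>x. (\<integral>y. f y \<partial>K x))"
    if fm: "f \<in> borel_measurable borel" and fb: "\<And>y. \<bar>f y\<bar> \<le> 1" for f :: "real \<Rightarrow> real"
  proof -
    have fb': "\<And>x. x \<in> space borel \<Longrightarrow> \<bar>f x\<bar> \<le> 1" using fb by simp
    have Mb: "AE x in A. emeasure (K x) (space (K x)) \<le> ennreal 1"
      by (rule AE_I2) (simp add: prob_space.emeasure_space_1[OF Kp])
    have "integral\<^sup>L (bind A K) f = (\<integral>x. integral\<^sup>L (K x) f \<partial>A)"
      by (rule integral_bind[OF fm fb' Kmeas A.finite_measure Mb])
    then show "(\<integral>y. f y \<partial>U01) = (\<integral>x. (\<integral>y. f y \<partial>K x) \<partial>A)" using bindU by simp
    have m: "(\<lambda>x. (\<integral>y. f y \<partial>K x)) \<in> borel_measurable A"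
      by (rule measurable_compose[OF Kmeas integral_measurable_subprob_algebra[OF fm]])
    show "integrable A (\<lambda>x. (\<integral>y. f y \<partial>K x))"
    proof (rule A.integrable_const_bound[where B=1, OF AE_I2 m])
      fix x assume x: "x \<in> space A"
      have "f \<in> borel_measurable (K x)" unfolding measurable_cong_sets[OF Ks[OF x] refl] by (rule fm)
      then show "norm (\<integral>y. f y \<partial>K x) \<le> 1" using abs_int_bound[OF Kp[OF x] _ fb] by simp
    qed
  qed
  have AE1: "AE x in A. measure (K x) {0..1} = 1"
  proof -
    have i: "integrable A (\<lambda>x. 1 - measure (K x) {0..1})" using mK1[of "{0..1}"] by simp
    have "(\<integral>x. 1 - measure (K x) {0..1} \<partial>A) = 0"
      using kint[of "{0..1}"] mK1[of "{0..1}"] by (simp add: Bochner_Integration.integral_diff A.prob_space)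
    then have "AE x in A. 1 - measure (K x) {0..1} = 0"
      using integral_nonneg_eq_0_iff_AE[OF i] ml1 by (auto intro!: AE_I2)
    then show ?thesis by simp
  qed
  have Qle: "{x \<in> space A. quantile_reg K \<tau> x \<le> c} = {x \<in> space A. (\<tau> \<le> measure (K x) {0..1} \<and> (1 \<le> c \<or> (0 \<le> c \<and> \<tau> \<le> measure (K x) {0..c}))) \<or> (\<not> \<tau> \<le> measure (K x) {0..1} \<and> Inf {} \<le> c)}" for c
  proof -
    have "quantile_reg K \<tau> x \<le> c \<longleftrightarrow> ((\<tau> \<le> measure (K x) {0..1} \<and> (1 \<le> c \<or> (0 \<le> c \<and> \<tau> \<le> measure (K x) {0..c}))) \<or> (\<not> \<tau> \<le> measure (K x) {0..1} \<and> Inf {} \<le> c))"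
      if x: "x \<in> space A" for x
    proof (cases "\<tau> \<le> measure (K x) {0..1}")
      case True
      then show ?thesis using qset_props(2)[OF Kp[OF x] Ks[OF x] True] by (simp add: quantile_reg_qset)
    next
      case False
      have "qset (K x) \<tau> = {}"
        using False measure_0y_mono[OF Kp[OF x] Ks[OF x], of _ 1] by (force simp: qset_def)
      then show ?thesis using False by (simp add: quantile_reg_qset)
    qed
    then show ?thesis by auto
  qed
  have mKc[measurable]: "(\<lambda>x. measure (K x) {0..c}) \<in> borel_measurable A" for c by (rule Km) simp
  have Qmeas: "quantile_reg K \<tau> \<in> borel_measurable A"
    unfolding borel_measurable_iff_le Qle by measurable
  have Qint: "integrable A (quantile_reg K \<tau>)"
  proof (rule A.integrable_const_bound[where B="1 + \<bar>Inf {}\<bar>", OF AE_I2 Qmeas])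
    fix x assume x: "x \<in> space A"
    show "norm (quantile_reg K \<tau> x) \<le> 1 + \<bar>Inf {}\<bar>"
    proof (cases "\<tau> \<le> measure (K x) {0..1}")
      case True
      then show ?thesis using qset_props(1)[OF Kp[OF x] Ks[OF x] True] by (auto simp: quantile_reg_qset qset_def)
    next
      case False
      have "qset (K x) \<tau> = {}"
        using False measure_0y_mono[OF Kp[OF x] Ks[OF x], of _ 1] by (force simp: qset_def)
      then show ?thesis by (simp add: quantile_reg_qset)
    qed
  qed
  define f1 where "f1 = (\<lambda>y::real. max 0 (\<tau> - max y 0))"
  have f1m: "f1 \<in> borel_measurable borel" unfolding f1_def by measurable
  have f1b: "\<bar>f1 y\<bar> \<le> 1" for y using tp t1 unfolding f1_def by auto
  have I1: "(\<integral>x. (\<integral>y. f1 y \<partial>K x) \<partial>A) = \<tau>\<^sup>2 / 2"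
    using intK[OF f1m f1b] U01_f1[of \<tau>] tp t1 unfolding f1_def by simp
  have low: "\<tau> / 2 \<le> (\<integral>x. quantile_reg K \<tau> x \<partial>A)"
  proof -
    have i: "integrable A (\<lambda>x. \<tau> - (\<integral>y. f1 y \<partial>K x) / \<tau>)"
      using intKi[OF f1m f1b] by simp
    have "(\<integral>x. \<tau> - (\<integral>y. f1 y \<partial>K x) / \<tau> \<partial>A) \<le> (\<integral>x. quantile_reg K \<tau> x \<partial>A)"
    proof (rule integral_mono_AE[OF i Qint])
      show "AE x in A. \<tau> - (\<integral>y. f1 y \<partial>K x) / \<tau> \<le> quantile_reg K \<tau> x"
        using AE1
      proof (rule AE_mp[OF _ AE_I2[OF impI]])
        fix x assume x: "x \<in> space A" and m1: "measure (K x) {0..1} = 1"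
        show "\<tau> - (\<integral>y. f1 y \<partial>K x) / \<tau> \<le> quantile_reg K \<tau> x"
          using q_lower[OF Kp[OF x] Ks[OF x] tp] m1 t1 unfolding f1_def quantile_reg_qset by simp
      qed
    qed
    moreover have "(\<integral>x. \<tau> - (\<integral>y. f1 y \<partial>K x) / \<tau> \<partial>A) = \<tau> / 2"
      using intKi[OF f1m f1b] I1 tp
      by (simp add: Bochner_Integration.integral_diff A.prob_space power2_eq_square)
    ultimately show ?thesis by simp
  qed
  have up: "(\<integral>x. quantile_reg K \<tau> x \<partial>A) \<le> (\<tau> + 1) / 2"
  proof (cases "\<tau> = 1")
    case True
    have "(\<integral>x. quantile_reg K \<tau> x \<partial>A) \<le> (\<integral>x. 1 \<partial>A)"
    proof (rule integral_mono_AE[OF Qint])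
      show "integrable A (\<lambda>x. 1)" by simp
      show "AE x in A. quantile_reg K \<tau> x \<le> 1"
        using AE1
      proof (rule AE_mp[OF _ AE_I2[OF impI]])
        fix x assume x: "x \<in> space A" and m1: "measure (K x) {0..1} = 1"
        show "quantile_reg K \<tau> x \<le> 1"
          using qset_props(1)[OF Kp[OF x] Ks[OF x]] m1 t1 unfolding quantile_reg_qset qset_def by simp
      qed
    qed
    then show ?thesis using True by (simp add: A.prob_space)
  next
    case False
    then have t1': "\<tau> < 1" using t1 by simp
    define f2 where "f2 = (\<lambda>y::real. max 0 (min y 1 - \<tau>))"
    have f2m: "f2 \<in> borel_measurable borel" unfolding f2_def by measurable
    have f2b: "\<bar>f2 y\<bar> \<le> 1" for y using tp t1 unfolding f2_def by auto
    have I2: "(\<integral>x. (\<integral>y. f2 y \<partial>K x) \<partial>A) = (1 - \<tau>)\<^sup>2 / 2"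
      using intK[OF f2m f2b] U01_f2[of \<tau>] tp t1 unfolding f2_def by simp
    have i: "integrable A (\<lambda>x. \<tau> + (\<integral>y. f2 y \<partial>K x) / (1 - \<tau>))"
      using intKi[OF f2m f2b] by simp
    have "(\<integral>x. quantile_reg K \<tau> x \<partial>A) \<le> (\<integral>x. \<tau> + (\<integral>y. f2 y \<partial>K x) / (1 - \<tau>) \<partial>A)"
    proof (rule integral_mono_AE[OF Qint i])
      show "AE x in A. quantile_reg K \<tau> x \<le> \<tau> + (\<integral>y. f2 y \<partial>K x) / (1 - \<tau>)"
        using AE1
      proof (rule AE_mp[OF _ AE_I2[OF impI]])
        fix x assume x: "x \<in> space A" and m1: "measure (K x) {0..1} = 1"
        show "quantile_reg K \<tau> x \<le> \<tau> + (\<integral>y. f2 y \<partial>K x) / (1 - \<tau>)"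
          using q_upper[OF Kp[OF x] Ks[OF x] tp t1' m1] unfolding f2_def quantile_reg_qset by simp
      qed
    qed
    moreover have "(\<integral>x. \<tau> + (\<integral>y. f2 y \<partial>K x) / (1 - \<tau>) \<partial>A) = (\<tau> + 1) / 2"
      using intKi[OF f2m f2b] I2 t1'
      by (simp add: A.prob_space power2_eq_square field_simps)
    ultimately show ?thesis by simp
  qed
  show ?thesis using low up by simp
qed



lemma fin_lb: "emeasure lborel (F \<inter> {x..y::real}) \<noteq> \<infinity>"
proof -
  have "bounded (F \<inter> {x..y})" by (rule bounded_subset[of "{x..y}"]) auto
  from emeasure_bounded_finite[OF this] show ?thesis by simp
qed

lemma fin_lb2: "emeasure lborel (F \<inter> {x<..y::real}) \<noteq> \<infinity>"
proof -
  have "bounded (F \<inter> {x<..y})" by (rule bounded_subset[of "{x..y}"]) auto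
  from emeasure_bounded_finite[OF this] show ?thesis by simp
qed

lemma affine_meas:
  fixes b c :: real and F :: "real set"
  assumes c: "0 \<le> c" and F: "F \<in> sets borel"
  shows "c * measure lborel ({0..1} \<inter> {u. b + c * u \<in> F}) = measure lborel (F \<inter> {b..b+c})"
proof (cases "c = 0")
  case True
  have s1: "F \<inter> {b..b+c} \<in> sets lborel" using F by simp
  have s2: "F \<inter> {b..b+c} \<subseteq> {b}" using True by auto
  have "F \<inter> {b..b+c} \<in> null_sets lborel"
    by (rule null_sets_subset[OF finite_imp_null_set_lborel[of "{b}"] s1 s2]) simp
  then have "measure lborel (F \<inter> {b..b+c}) = 0" by (simp add: measure_def null_setsD1)
  then show ?thesis using True by simp
next
  case False
  then have c0: "0 < c" using c by simp
  let ?g = "\<lambda>u::real. b + c * u"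
  have gm: "?g \<in> measurable borel borel" by measurable
  have FI: "F \<inter> {b..b+c} \<in> sets borel" using F by auto
  have "emeasure lborel (F \<inter> {b..b+c}) = emeasure (density (distr lborel borel ?g) (\<lambda>_. ennreal c)) (F \<inter> {b..b+c})"
    using lborel_real_affine[of c b] c0 by simp
  also have "\<dots> = ennreal c * emeasure (distr lborel borel ?g) (F \<inter> {b..b+c})"
    by (rule emeasure_density_const) (use FI in simp_all)
  also have "\<dots> = ennreal c * emeasure lborel (?g -` (F \<inter> {b..b+c}))"
    using FI by (subst emeasure_distr) (auto simp: gm)
  also have "?g -` (F \<inter> {b..b+c}) = {0..1} \<inter> {u. b + c * u \<in> F}"
  proof -
    have "b \<le> b + c * u \<longleftrightarrow> 0 \<le> u" for u using c0 by (simp add: zero_le_mult_iff)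
    moreover have "b + c * u \<le> b + c \<longleftrightarrow> u \<le> 1" for u using c0 by simp
    ultimately show ?thesis by auto
  qed
  finally have e: "emeasure lborel (F \<inter> {b..b+c}) = ennreal c * emeasure lborel ({0..1} \<inter> {u. b + c * u \<in> F})" .
  have "{0..1} \<inter> {u. b + c * u \<in> F} = {u. b + c * u \<in> F} \<inter> {0..1}" by auto
  then show ?thesis using e c0 by (simp add: measure_def enn2real_mult)
qed

lemma split_meas:
  fixes a :: real
  assumes a: "0 \<le> a" "a \<le> 1" and F: "F \<in> sets borel"
  shows "measure lborel (F \<inter> {0..a}) + measure lborel (F \<inter> {a..1}) = measure lborel (F \<inter> {0..1})"
proof -
  have s1: "F \<inter> {a} \<in> sets lborel" using F by simp
  have n: "F \<inter> {a} \<in> null_sets lborel"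
    by (rule null_sets_subset[OF finite_imp_null_set_lborel[of "{a}"] s1]) auto
  have e1: "F \<inter> {a..1} = (F \<inter> {a<..1}) \<union> (F \<inter> {a})" using a by auto
  have m1: "measure lborel (F \<inter> {a..1}) = measure lborel (F \<inter> {a<..1})"
    unfolding e1 using F n by (intro measure_Un_null_set) auto
  have e2: "F \<inter> {0..1} = (F \<inter> {0..a}) \<union> (F \<inter> {a<..1})" using a by auto
  have "measure lborel (F \<inter> {0..1}) = measure lborel (F \<inter> {0..a}) + measure lborel (F \<inter> {a<..1})"
    unfolding e2 using F fin_lb fin_lb2 by (intro measure_Union) auto
  then show ?thesis using m1 by simp
qed

lemma ind_U01:
  fixes b c :: real assumes F: "F \<in> sets borel"
  shows "(\<integral>u. indicator F (b + c * u) \<partial>U01) = measure lborel ({0..1} \<inter> {u. b + c * u \<in> F})"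
proof -
  interpret U: prob_space U01 by (rule prob_U01)
  have S: "{u. b + c * u \<in> F} \<in> sets borel"
  proof -
    have "(\<lambda>u::real. b + c * u) \<in> borel_measurable borel" by measurable
    from measurable_sets_borel[OF this F] show ?thesis by (simp add: vimage_def)
  qed
  have "(\<integral>u. indicator F (b + c * u) \<partial>U01) = (\<integral>u. indicator {u. b + c * u \<in> F} u \<partial>U01)"
    by (rule Bochner_Integration.integral_cong) (auto split: split_indicator)
  also have "\<dots> = measure U01 {u. b + c * u \<in> F}"
    using S U.emeasure_finite by simp
  also have "\<dots> = measure lborel ({0..1} \<inter> {u. b + c * u \<in> F})"
    using S by simp
  finally show ?thesis .
qed

lemma mix:
  fixes a :: real
  assumes a: "0 \<le> a" "a \<le> 1" and F: "F \<in> sets borel"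
  shows "(\<integral>u. a * indicator F (a * u) + (1 - a) * indicator F (a + (1 - a) * u) \<partial>U01) = measure U01 F"
proof -
  interpret U: prob_space U01 by (rule prob_U01)
  have [measurable]: "F \<in> sets borel" by fact
  have i1: "integrable U01 (\<lambda>u. indicator F (0 + a * u) :: real)"
    by (rule U.integrable_const_bound[where B=1]) (auto split: split_indicator)
  have i2: "integrable U01 (\<lambda>u. indicator F (a + (1 - a) * u) :: real)"
    by (rule U.integrable_const_bound[where B=1]) (auto split: split_indicator)
  have "(\<integral>u. a * indicator F (a * u) + (1 - a) * indicator F (a + (1 - a) * u) \<partial>U01)
     = a * (\<integral>u. indicator F (0 + a * u) \<partial>U01) + (1 - a) * (\<integral>u. indicator F (a + (1 - a) * u) \<partial>U01)"
    using i1 i2 by simp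
  also have "\<dots> = a * measure lborel ({0..1} \<inter> {u. 0 + a * u \<in> F}) + (1 - a) * measure lborel ({0..1} \<inter> {u. a + (1 - a) * u \<in> F})"
    using F by (simp only: ind_U01)
  also have "\<dots> = measure lborel (F \<inter> {0..0+a}) + measure lborel (F \<inter> {a..a+(1-a)})"
    using a F by (simp only: affine_meas)
  also have "\<dots> = measure lborel (F \<inter> {0..1})" using split_meas[OF a F] by simp
  also have "\<dots> = measure U01 F" using F by (simp add: Int_commute)
  finally show ?thesis .
qed



lemma pe5: "prob_space M \<Longrightarrow> emeasure M F = ennreal (measure M F)"
  by (simp add: finite_measure.emeasure_eq_measure prob_space_def)

lemma Q_meas:
  assumes Kp: "\<And>x. x \<in> space A \<Longrightarrow> prob_space (K x)" and Ks: "\<And>x. x \<in> space A \<Longrightarrow> sets (K x) = sets borel"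
    and Km: "\<And>F. F \<in> sets borel \<Longrightarrow> (\<lambda>x. measure (K x) F) \<in> borel_measurable A"
  shows "quantile_reg K \<tau> \<in> borel_measurable A"
proof -
  have Qle: "{x \<in> space A. quantile_reg K \<tau> x \<le> c} = {x \<in> space A. (\<tau> \<le> measure (K x) {0..1} \<and> (1 \<le> c \<or> (0 \<le> c \<and> \<tau> \<le> measure (K x) {0..c}))) \<or> (\<not> \<tau> \<le> measure (K x) {0..1} \<and> Inf {} \<le> c)}" for c
  proof -
    have "quantile_reg K \<tau> x \<le> c \<longleftrightarrow> ((\<tau> \<le> measure (K x) {0..1} \<and> (1 \<le> c \<or> (0 \<le> c \<and> \<tau> \<le> measure (K x) {0..c}))) \<or> (\<not> \<tau> \<le> measure (K x) {0..1} \<and> Inf {} \<le> c))"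
      if x: "x \<in> space A" for x
    proof (cases "\<tau> \<le> measure (K x) {0..1}")
      case True
      then show ?thesis using qset_props(2)[OF Kp[OF x] Ks[OF x] True] by (simp add: quantile_reg_qset)
    next
      case False
      have "qset (K x) \<tau> = {}"
        using False measure_0y_mono[OF Kp[OF x] Ks[OF x], of _ 1] by (force simp: qset_def)
      then show ?thesis using False by (simp add: quantile_reg_qset)
    qed
    then show ?thesis by auto
  qed
  have mKc[measurable]: "(\<lambda>x. measure (K x) {0..c}) \<in> borel_measurable A" for c by (rule Km) simp
  show ?thesis
    unfolding borel_measurable_iff_le Qle by measurable
qed

lemma bool_prob:
  assumes "0 \<le> a" "a \<le> 1"
  shows "measure (measure_pmf (bernoulli_pmf a)) S = (if True \<in> S then a else 0) + (if False \<in> S then 1 - a else 0)"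
proof -
  have "measure (measure_pmf (bernoulli_pmf a)) S = sum (pmf (bernoulli_pmf a)) S"
    by (rule measure_measure_pmf_finite) simp
  also have "\<dots> = (\<Sum>b\<in>UNIV. if b \<in> S then pmf (bernoulli_pmf a) b else 0)"
    by (simp add: sum.If_cases)
  also have "\<dots> = (if True \<in> S then a else 0) + (if False \<in> S then 1 - a else 0)"
    using assms by (simp add: UNIV_bool)
  finally show ?thesis .
qed

lemma qval:
  fixes a u \<tau> :: real
  assumes a: "0 \<le> a" "a \<le> 1" and u: "0 \<le> u" "u \<le> 1" and t: "0 < \<tau>" "\<tau> \<le> 1"
  shows "Inf {y \<in> {0..1}. \<tau> \<le> a * indicator {0..y} (a * u) + (1 - a) * indicator {0..y} (a + (1 - a) * u)}
        = (if \<tau> \<le> a then a * u else a + (1 - a) * u)"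
proof -
  have au0: "0 \<le> a * u" using a u by simp
  have au1: "a * u \<le> a" using a u by (simp add: mult_left_le)
  have h0: "a \<le> a + (1 - a) * u" using a u by simp
  have h1: "a + (1 - a) * u \<le> 1"
  proof -
    have "(1 - a) * u \<le> 1 - a" using a u by (simp add: mult_left_le)
    then show ?thesis by simp
  qed
  show ?thesis
  proof (cases "\<tau> \<le> a")
    case True
    have "Inf {y \<in> {0..1}. \<tau> \<le> a * indicator {0..y} (a * u) + (1 - a) * indicator {0..y} (a + (1 - a) * u)} = a * u"
    proof (rule cInf_eq_minimum)
      have "a \<le> a * indicator {0..a*u} (a * u) + (1 - a) * indicator {0..a*u} (a + (1 - a) * u)"
        using au0 a by (simp add: indicator_def)
      then have m: "\<tau> \<le> a * indicator {0..a*u} (a * u) + (1 - a) * indicator {0..a*u} (a + (1 - a) * u)"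
        using True by linarith
      show "a * u \<in> {y \<in> {0..1}. \<tau> \<le> a * indicator {0..y} (a * u) + (1 - a) * indicator {0..y} (a + (1 - a) * u)}"
      proof (rule CollectI, rule conjI)
        show "a * u \<in> {0..1}" using au0 au1 a by auto
      qed (rule m)
    next
      fix y assume y: "y \<in> {y \<in> {0..1}. \<tau> \<le> a * indicator {0..y} (a * u) + (1 - a) * indicator {0..y} (a + (1 - a) * u)}"
      show "a * u \<le> y"
      proof (rule ccontr)
        assume "\<not> a * u \<le> y"
        then have "a * indicator {0..y} (a * u) + (1 - a) * indicator {0..y} (a + (1 - a) * u) = (0::real)"
          using au1 h0 by (auto simp: indicator_def)
        then show False using y t by simp
      qed
    qed
    then show ?thesis using True by simp
  next
    case False
    have "Inf {y \<in> {0..1}. \<tau> \<le> a * indicator {0..y} (a * u) + (1 - a) * indicator {0..y} (a + (1 - a) * u)} = a + (1 - a) * u"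
    proof (rule cInf_eq_minimum)
      have "a * indicator {0..a + (1 - a) * u} (a * u) + (1 - a) * indicator {0..a + (1 - a) * u} (a + (1 - a) * u) = (1::real)"
        using au0 au1 h0 a by (simp add: indicator_def)
      then show "a + (1 - a) * u \<in> {y \<in> {0..1}. \<tau> \<le> a * indicator {0..y} (a * u) + (1 - a) * indicator {0..y} (a + (1 - a) * u)}"
        using t h0 h1 a by auto
    next
      fix y assume y: "y \<in> {y \<in> {0..1}. \<tau> \<le> a * indicator {0..y} (a * u) + (1 - a) * indicator {0..y} (a + (1 - a) * u)}"
      show "a + (1 - a) * u \<le> y"
      proof (rule ccontr)
        assume "\<not> a + (1 - a) * u \<le> y"
        then have "a * indicator {0..y} (a * u) + (1 - a) * indicator {0..y} (a + (1 - a) * u) \<le> (a::real)"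
          using a by (auto simp: indicator_def)
        then show False using y False by simp
      qed
    qed
    then show ?thesis using False by simp
  qed
qed

lemma int_lin_U01: "(\<integral>u. \<alpha> + \<beta> * u \<partial>U01) = \<alpha> + \<beta> / 2"
proof -
  have "((\<lambda>y. \<alpha> + \<beta> * y) has_integral (\<alpha> + \<beta> / 2)) {0..1}"
    by (rule ftc_lin) auto
  then show ?thesis by (subst integral_U01) (auto intro!: continuous_intros simp: integral_unique)
qed



lemma construct:
  fixes d :: nat and A :: "(nat \<Rightarrow> real) measure" and a \<tau> :: real
  assumes d2: "d \<ge> 2" and Acop: "is_copula (d - 1) A" and a0: "0 \<le> a" and a1: "a \<le> 1"
    and tp: "0 < \<tau>" and t1: "\<tau> \<le> 1"
  shows "\<exists>C K. C \<in> copulas_with_marginal d A \<and> is_markov_kernel_of d A C K \<and>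
     (\<integral>x. quantile_reg K \<tau> x \<partial>A) = (if \<tau> \<le> a then a / 2 else (1 + a) / 2)"
proof -
  define n where "n = d - 1"
  have nd: "n < d" "0 < n" "d = Suc n" using d2 by (auto simp: n_def)
  have PA: "prob_space A" and SA: "sets A = sets (cube_space n)"
    and UA: "\<And>i. i < n \<Longrightarrow> distr A borel (\<lambda>x. x i) = U01"
    using Acop by (auto simp: is_copula_def n_def)
  interpret A: prob_space A by (rule PA)
  have spA: "space A = PiE {..<n} (\<lambda>_. UNIV)"
    using sets_eq_imp_space_eq[OF SA] by (simp add: cube_space_def space_PiM)
  have xi: "\<And>i. i < n \<Longrightarrow> (\<lambda>x. x i) \<in> borel_measurable A"
    unfolding measurable_cong_sets[OF SA refl] cube_space_def by (intro measurable_component_singleton) auto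
  have x0m[measurable]: "(\<lambda>x. x 0) \<in> borel_measurable A" using xi nd by simp
  define P where "P = measure_pmf (bernoulli_pmf a)"
  define Y where "Y = (\<lambda>(x::nat \<Rightarrow> real) b. if b then a * x 0 else a + (1 - a) * x 0)"
  define K where "K = (\<lambda>x. distr P borel (Y x))"
  define \<Phi> where "\<Phi> = (\<lambda>\<omega>::(nat \<Rightarrow> real) \<times> bool. \<lambda>i. if i = n then Y (fst \<omega>) (snd \<omega>) else fst \<omega> i)"
  define C where "C = distr (A \<Otimes>\<^sub>M P) (cube_space d) \<Phi>"
  interpret P: prob_space P unfolding P_def by (rule prob_space_measure_pmf)
  have SP: "sets P = sets (count_space UNIV)" unfolding P_def by (rule sets_measure_pmf_count_space)
  have spP: "space P = UNIV" unfolding P_def by simp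
  have YP: "Y x \<in> measurable P borel" for x unfolding measurable_cong_sets[OF SP refl] by simp
  have Kp: "prob_space (K x)" for x unfolding K_def by (rule P.prob_space_distr[OF YP])
  have Ks: "sets (K x) = sets borel" for x unfolding K_def by simp
  have KF: "measure (K x) F = a * indicator F (a * x 0) + (1 - a) * indicator F (a + (1 - a) * x 0)"
    if F: "F \<in> sets borel" for x F
  proof -
    have "measure (K x) F = measure P (Y x -` F \<inter> space P)" unfolding K_def by (rule measure_distr[OF YP F])
    also have "\<dots> = (if True \<in> Y x -` F \<inter> space P then a else 0) + (if False \<in> Y x -` F \<inter> space P then 1 - a else 0)"
      unfolding P_def by (rule bool_prob[OF a0 a1])
    finally show ?thesis by (simp add: Y_def spP indicator_def)
  qed
  have Km: "(\<lambda>x. measure (K x) F) \<in> borel_measurable A" if F: "F \<in> sets borel" for F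
  proof -
    have [measurable]: "F \<in> sets borel" by fact
    have "(\<lambda>x. a * indicator F (a * x 0) + (1 - a) * indicator F (a + (1 - a) * x 0) :: real) \<in> borel_measurable A"
      by measurable
    then show ?thesis using KF[OF F] by simp
  qed
  have SAP: "sets (A \<Otimes>\<^sub>M P) = sets (A \<Otimes>\<^sub>M count_space UNIV)" by (rule sets_pair_measure_cong[OF refl SP])
  have spAP: "space (A \<Otimes>\<^sub>M P) = space A \<times> UNIV" by (simp add: space_pair_measure spP)
  have Ym: "(\<lambda>\<omega>. Y (fst \<omega>) (snd \<omega>)) \<in> borel_measurable (A \<Otimes>\<^sub>M P)"
    unfolding measurable_cong_sets[OF SAP refl] Y_def by measurable
  have \<Phi>m: "\<Phi> \<in> measurable (A \<Otimes>\<^sub>M P) (cube_space d)"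
    unfolding cube_space_def \<Phi>_def
  proof (rule measurable_PiM_single')
    fix i assume i: "i \<in> {..<d}"
    show "(\<lambda>\<omega>. if i = n then Y (fst \<omega>) (snd \<omega>) else fst \<omega> i) \<in> borel_measurable (A \<Otimes>\<^sub>M P)"
    proof (cases "i = n")
      case True then show ?thesis using Ym by simp
    next
      case False
      then have "i < n" using i nd by auto
      then show ?thesis using False measurable_compose[OF measurable_fst xi] by simp
    qed
  next
    show "(\<lambda>\<omega> i. if i = n then Y (fst \<omega>) (snd \<omega>) else fst \<omega> i) \<in> space (A \<Otimes>\<^sub>M P) \<rightarrow> (\<Pi>\<^sub>E i\<in>{..<d}. space borel)"
      using nd by (auto simp: spAP spA PiE_def extensional_def)
  qed
  have PC: "prob_space C" unfolding C_def
    by (rule prob_space.prob_space_distr[OF prob_space_pair[OF PA P.prob_space_axioms] \<Phi>m])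
  interpret C: prob_space C by (rule PC)
  have SC: "sets C = sets (cube_space d)" by (simp add: C_def)
  have spC: "space C = PiE {..<d} (\<lambda>_. UNIV)"
    using sets_eq_imp_space_eq[OF SC] by (simp add: cube_space_def space_PiM)
  have rm: "(\<lambda>z. restrict z {..<n}) \<in> measurable (cube_space d) (cube_space n)"
    unfolding cube_space_def by (rule measurable_restrict_subset) (use nd in auto)
  have znm: "(\<lambda>z. z i) \<in> measurable (cube_space d) borel" if "i < d" for i
    unfolding cube_space_def using that by (intro measurable_component_singleton) auto
  have rest: "restrict (\<Phi> \<omega>) {..<n} = fst \<omega>" if "\<omega> \<in> space (A \<Otimes>\<^sub>M P)" for \<omega>
    using that by (auto simp: spAP spA \<Phi>_def restrict_def fun_eq_iff PiE_def extensional_def)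
  have \<Phi>n: "\<Phi> \<omega> n = Y (fst \<omega>) (snd \<omega>)" for \<omega> by (simp add: \<Phi>_def)
  have Kid: "measure C {z \<in> space C. restrict z {..<n} \<in> B \<and> z n \<in> F} = set_lebesgue_integral A B (\<lambda>x. measure (K x) F)"
    if B: "B \<in> sets A" and F: "F \<in> sets borel" for B F
  proof -
    let ?S = "{z \<in> space C. restrict z {..<n} \<in> B \<and> z n \<in> F}"
    have "?S = ((\<lambda>z. restrict z {..<n}) -` B \<inter> space (cube_space d)) \<inter> ((\<lambda>z. z n) -` F \<inter> space (cube_space d))"
      using sets_eq_imp_space_eq[OF SC] by auto
    moreover have "((\<lambda>z. restrict z {..<n}) -` B \<inter> space (cube_space d)) \<in> sets (cube_space d)"
      using measurable_sets[OF rm] B SA by simp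
    moreover have "((\<lambda>z. z n) -` F \<inter> space (cube_space d)) \<in> sets (cube_space d)"
      using measurable_sets[OF znm[OF nd(1)] F] .
    ultimately have Ss: "?S \<in> sets (cube_space d)" by simp
    define X where "X = \<Phi> -` ?S \<inter> space (A \<Otimes>\<^sub>M P)"
    have Xs: "X \<in> sets (A \<Otimes>\<^sub>M P)" unfolding X_def by (rule measurable_sets[OF \<Phi>m Ss])
    have mC0: "measure (distr (A \<Otimes>\<^sub>M P) (cube_space d) \<Phi>) ?S = measure (A \<Otimes>\<^sub>M P) (\<Phi> -` ?S \<inter> space (A \<Otimes>\<^sub>M P))"
      by (rule measure_distr[OF \<Phi>m Ss])
    have mC: "measure C ?S = measure (A \<Otimes>\<^sub>M P) X" using mC0 unfolding X_def C_def[symmetric] .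
    have X_eq: "X = {\<omega> \<in> space (A \<Otimes>\<^sub>M P). fst \<omega> \<in> B \<and> Y (fst \<omega>) (snd \<omega>) \<in> F}"
    proof -
      have "\<Phi> \<omega> \<in> space C" if "\<omega> \<in> space (A \<Otimes>\<^sub>M P)" for \<omega>
        using measurable_space[OF \<Phi>m that] sets_eq_imp_space_eq[OF SC] by simp
      then show ?thesis unfolding X_def using rest \<Phi>n by auto
    qed
    have sec: "emeasure P (Pair x -` X) = ennreal (indicator B x * measure (K x) F)" if x: "x \<in> space A" for x
    proof -
      have "Pair x -` X = (if x \<in> B then Y x -` F \<inter> space P else {})" using x by (auto simp: X_eq spAP spP)
      moreover have "measure (K x) F = measure P (Y x -` F \<inter> space P)" unfolding K_def by (rule measure_distr[OF YP F])
      ultimately show ?thesis by (simp add: P.emeasure_eq_measure)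
    qed
    have ii: "integrable A (\<lambda>x. indicator B x * measure (K x) F)"
    proof (rule A.integrable_const_bound[where B=1])
      show "AE x in A. norm (indicator B x * measure (K x) F) \<le> 1"
        using prob_space.prob_le_1[OF Kp] by (auto intro!: AE_I2 split: split_indicator)
      have [measurable]: "B \<in> sets A" by fact
      show "(\<lambda>x. indicator B x * measure (K x) F) \<in> borel_measurable A" using Km[OF F] by measurable
    qed
    have "emeasure (A \<Otimes>\<^sub>M P) X = (\<integral>\<^sup>+x. emeasure P (Pair x -` X) \<partial>A)"
      by (rule P.emeasure_pair_measure_alt[OF Xs])
    also have "\<dots> = (\<integral>\<^sup>+x. ennreal (indicator B x * measure (K x) F) \<partial>A)"
      by (rule nn_integral_cong) (simp add: sec)
    also have "\<dots> = ennreal (\<integral>x. indicator B x * measure (K x) F \<partial>A)"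
      by (rule nn_integral_eq_integral[OF ii]) (auto intro!: AE_I2)
    finally have "measure (A \<Otimes>\<^sub>M P) X = (\<integral>x. indicator B x * measure (K x) F \<partial>A)"
      by (simp add: measure_def integral_nonneg_AE)
    then show ?thesis using mC by (simp add: set_lebesgue_integral_def)
  qed
  have margn: "distr C borel (\<lambda>z. z n) = U01"
  proof (rule measure_eqI)
    show "sets (distr C borel (\<lambda>z. z n)) = sets U01" by simp
  next
    fix F assume "F \<in> sets (distr C borel (\<lambda>z. z n))"
    then have F: "F \<in> sets borel" by simp
    have znC: "(\<lambda>z. z n) \<in> measurable C borel"
      unfolding measurable_cong_sets[OF SC refl] by (rule znm[OF nd(1)])
    have "measure (distr C borel (\<lambda>z. z n)) F = measure C ((\<lambda>z. z n) -` F \<inter> space C)"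
      by (rule measure_distr[OF znC F])
    also have "(\<lambda>z. z n) -` F \<inter> space C = {z \<in> space C. restrict z {..<n} \<in> space A \<and> z n \<in> F}"
      by (auto simp: spA)
    also have "measure C \<dots> = set_lebesgue_integral A (space A) (\<lambda>x. measure (K x) F)"
      by (rule Kid[OF _ F]) simp
    also have "\<dots> = (\<integral>x. a * indicator F (a * x 0) + (1 - a) * indicator F (a + (1 - a) * x 0) \<partial>A)"
      unfolding set_lebesgue_integral_def by (rule Bochner_Integration.integral_cong) (auto simp: KF[OF F])
    also have "\<dots> = (\<integral>u. a * indicator F (a * u) + (1 - a) * indicator F (a + (1 - a) * u) \<partial>distr A borel (\<lambda>x. x 0))"
      using F by (subst integral_distr) (auto simp: x0m)
    also have "\<dots> = measure U01 F" using UA[OF nd(2)] mix[OF a0 a1 F] by simp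
    finally have "measure (distr C borel (\<lambda>z. z n)) F = measure U01 F" .
    moreover have "prob_space (distr C borel (\<lambda>z. z n))" by (rule C.prob_space_distr[OF znC])
    ultimately show "emeasure (distr C borel (\<lambda>z. z n)) F = emeasure U01 F"
      using prob_U01 by (simp add: pe5)
  qed
  have margi: "distr C borel (\<lambda>z. z i) = U01" if i: "i < n" for i
  proof -
    have "distr C borel (\<lambda>z. z i) = distr (A \<Otimes>\<^sub>M P) borel ((\<lambda>z. z i) \<circ> \<Phi>)"
      unfolding C_def by (rule distr_distr[OF znm \<Phi>m]) (use i nd in simp)
    also have "\<dots> = distr (A \<Otimes>\<^sub>M P) borel ((\<lambda>x. x i) \<circ> fst)"
      by (rule distr_cong) (use i in \<open>auto simp: \<Phi>_def\<close>)
    also have "\<dots> = distr (distr (A \<Otimes>\<^sub>M P) A fst) borel (\<lambda>x. x i)"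
      by (rule distr_distr[symmetric, OF xi[OF i] measurable_fst])
    also have "\<dots> = distr A borel (\<lambda>x. x i)" by (simp add: P.distr_pair_fst)
    finally show ?thesis using UA[OF i] by simp
  qed
  have cop: "is_copula d C"
    unfolding is_copula_def
  proof (intro conjI allI impI PC SC)
    fix i assume "i < d"
    then have "i < n \<or> i = n" using nd by auto
    then show "distr C borel (\<lambda>z. z i) = U01" using margi margn by auto
  qed
  have mf: "marg_first d C = A"
  proof -
    have "marg_first d C = distr C (cube_space n) (\<lambda>z. restrict z {..<n})"
      by (simp add: marg_first_def n_def)
    also have "\<dots> = distr (A \<Otimes>\<^sub>M P) (cube_space n) ((\<lambda>z. restrict z {..<n}) \<circ> \<Phi>)"
      unfolding C_def by (rule distr_distr[OF rm \<Phi>m])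
    also have "\<dots> = distr (A \<Otimes>\<^sub>M P) A fst"
      by (rule distr_cong) (auto simp: SA rest)
    also have "\<dots> = A" by (rule P.distr_pair_fst)
    finally show ?thesis .
  qed
  have mk: "is_markov_kernel_of d A C K"
    unfolding is_markov_kernel_of_def n_def[symmetric] using Kp Ks Km Kid by simp
  have AEu: "AE x in A. x 0 \<in> {0..1}"
  proof -
    have "AE u in U01. u \<in> {0..1}" by (rule AE_uniform_measureI) auto
    then have "AE u in distr A borel (\<lambda>x. x 0). u \<in> {0..1}" unfolding UA[OF nd(2)] .
    then show ?thesis by (rule AE_distrD[OF x0m])
  qed
  have Qm: "quantile_reg K \<tau> \<in> borel_measurable A"
    by (rule Q_meas[OF Kp Ks Km])
  define g where "g = (\<lambda>u::real. (if \<tau> \<le> a then 0 else a) + (if \<tau> \<le> a then a else 1 - a) * u)"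
  have "(\<integral>x. quantile_reg K \<tau> x \<partial>A) = (\<integral>x. g (x 0) \<partial>A)"
  proof (rule integral_cong_AE[OF Qm])
    show "(\<lambda>x. g (x 0)) \<in> borel_measurable A" unfolding g_def by measurable
    show "AE x in A. quantile_reg K \<tau> x = g (x 0)"
      using AEu
    proof (rule AE_mp[OF _ AE_I2[OF impI]])
      fix x assume x: "x \<in> space A" and u: "x 0 \<in> {0..1}"
      have "quantile_reg K \<tau> x = Inf {y \<in> {0..1}. \<tau> \<le> a * indicator {0..y} (a * x 0) + (1 - a) * indicator {0..y} (a + (1 - a) * x 0)}"
        unfolding quantile_reg_def by (simp add: KF)
      also have "\<dots> = (if \<tau> \<le> a then a * x 0 else a + (1 - a) * x 0)"
        using qval[OF a0 a1 _ _ tp t1, of "x 0"] u by simp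
      finally show "quantile_reg K \<tau> x = g (x 0)" by (simp add: g_def)
    qed
  qed
  also have "\<dots> = (\<integral>u. g u \<partial>distr A borel (\<lambda>x. x 0))"
    by (subst integral_distr) (auto simp: g_def)
  also have "\<dots> = (if \<tau> \<le> a then a / 2 else (1 + a) / 2)"
    unfolding UA[OF nd(2)] g_def int_lin_U01 by (simp add: field_simps)
  finally have val: "(\<integral>x. quantile_reg K \<tau> x \<partial>A) = (if \<tau> \<le> a then a / 2 else (1 + a) / 2)" .
  have Cin: "C \<in> copulas_with_marginal d A" using cop mf by (simp add: copulas_with_marginal_def)
  show ?thesis by (rule exI[of _ C], rule exI[of _ K]) (intro conjI Cin mk val)
qed



theorem theorem19:
  fixes d :: nat and A :: "(nat \<Rightarrow> real) measure" and \<tau> :: real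
  assumes "d \<ge> 2" and "is_copula (d - 1) A" and "0 < \<tau>" and "\<tau> \<le> 1"
  shows "(\<forall>C K. C \<in> copulas_with_marginal d A \<and> is_markov_kernel_of d A C K \<longrightarrow>
            \<tau> / 2 \<le> (\<integral>x. quantile_reg K \<tau> x \<partial>A) \<and> (\<integral>x. quantile_reg K \<tau> x \<partial>A) \<le> (\<tau> + 1) / 2)
       \<and> Inf {(\<integral>x. quantile_reg K \<tau> x \<partial>A) | C K.
               C \<in> copulas_with_marginal d A \<and> is_markov_kernel_of d A C K} = \<tau> / 2
       \<and> Sup {(\<integral>x. quantile_reg K \<tau> x \<partial>A) | C K.
               C \<in> copulas_with_marginal d A \<and> is_markov_kernel_of d A C K} = (\<tau> + 1) / 2"
proof -
  let ?S = "{(\<integral>x. quantile_reg K \<tau> x \<partial>A) | C K.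
               C \<in> copulas_with_marginal d A \<and> is_markov_kernel_of d A C K}"
  have B: "\<forall>C K. C \<in> copulas_with_marginal d A \<and> is_markov_kernel_of d A C K \<longrightarrow>
            \<tau> / 2 \<le> (\<integral>x. quantile_reg K \<tau> x \<partial>A) \<and> (\<integral>x. quantile_reg K \<tau> x \<partial>A) \<le> (\<tau> + 1) / 2"
    using bounds[OF assms(1,2,3,4)] by blast
  have Bl: "\<And>v. v \<in> ?S \<Longrightarrow> \<tau> / 2 \<le> v" and Bu: "\<And>v. v \<in> ?S \<Longrightarrow> v \<le> (\<tau> + 1) / 2"
    using B by blast+
  have mem: "(if \<tau> \<le> a then a / 2 else (1 + a) / 2) \<in> ?S" if a0: "0 \<le> a" and a1: "a \<le> 1" for a
  proof -
    obtain C K where "C \<in> copulas_with_marginal d A" "is_markov_kernel_of d A C K"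
      "(\<integral>x. quantile_reg K \<tau> x \<partial>A) = (if \<tau> \<le> a then a / 2 else (1 + a) / 2)"
      using construct[OF assms(1,2) a0 a1 assms(3,4)] by blast
    then show ?thesis by force
  qed
  have mt: "\<tau> / 2 \<in> ?S" using mem[of \<tau>] assms by simp
  have I: "Inf ?S = \<tau> / 2"
    by (rule cInf_eq_minimum[OF mt Bl])
  have Su: "Sup ?S = (\<tau> + 1) / 2"
  proof (rule cSup_eq_non_empty)
    show "?S \<noteq> {}"
      using exI[of "\<lambda>v. v \<in> ?S", OF mt] by (simp only: ex_in_conv) simp
    show "\<And>v. v \<in> ?S \<Longrightarrow> v \<le> (\<tau> + 1) / 2" by (rule Bu)
    fix y assume ub: "\<And>v. v \<in> ?S \<Longrightarrow> v \<le> y"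
    show "(\<tau> + 1) / 2 \<le> y"
    proof (rule dense_le_bounded[of "1/2"])
      show "1 / 2 < (\<tau> + 1) / 2" using assms by simp
      fix w assume w: "1 / 2 < w" "w < (\<tau> + 1) / 2"
      have "(if \<tau> \<le> 2 * w - 1 then (2 * w - 1) / 2 else (1 + (2 * w - 1)) / 2) \<in> ?S"
        using w assms by (intro mem) auto
      moreover have "\<not> \<tau> \<le> 2 * w - 1" using w by simp
      ultimately have "w \<in> ?S" by simp
      then show "w \<le> y" by (rule ub)
    qed
  qed
  show ?thesis using B I Su by blast
qed

end
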